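(* Let $T$ be a complete theory with monster model $\mathcal{U}$, $A\subseteq\mathcal{U}$ small, $b$ a finite tuple from $\mathcal{U}$, $\mu\in\mathfrak{M}_x(\mathcal{U})$, $\nu\in\mathfrak{M}_y(\mathcal{U})$, and $\varphi(y,b)\in\mathcal{L}_y(b)$ with $0<\nu(\varphi(y,b))<1$. If $\mu\blacktriangleright_A\nu$, then $\mu\blacktriangleright_{Ab}\nu_{[\varphi]}$.
   Context: For $C\subseteq\mathcal{U}$, $\mathcal{L}_x(C)$ is the Boolean algebra of formulas in $x$ with parameters from $C$ modulo $T$, embedded in $\mathcal{L}_{xy}(C)$ via $\varphi(x)\mapsto\varphi(x)\wedge y=y$; $\mathfrak{M}_x(C)$ is the set of finitely additive probability measures on $\mathcal{L}_x(C)$. For $\omega\in\mathfrak{M}_{xy}(C)$, $\pi_x(\omega)(\varphi(x))=\omega(\varphi(x)\wedge y=y)$ (similarly $\pi_y$); $\omega|_D$ is restriction. $\mathfrak{M}^{\mathrm{Am}}_{xy}(C)$ is the set of $\lambda\in\mathfrak{M}_{xy}(C)$ with $\lambda(\varphi(x)\wedge\psi(y))=\pi_x(\lambda)(\varphi(x))\pi_y(\lambda)(\psi(y))$ for all $\varphi(x)\in\mathcal{L}_x(C),\psi(y)\in\mathcal{L}_y(C)$. For $\lambda\in\mathfrak{M}^{\mathrm{Am}}_{xy}(A)$ with $\pi_x(\lambda)=\mu|_A$: $\operatorname{Amal}(\lambda,\mu)=\{\omega\in\mathfrak{M}^{\mathrm{Am}}_{xy}(\mathcal{U}):\omega|_A=\lambda,\pi_x(\omega)=\mu\}$.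 $\mu\blacktriangleright_A\nu$ means there is $\lambda\in\mathfrak{M}_{xy}(A)$ with $\pi_x(\lambda)=\mu|_A$, $\operatorname{Amal}(\lambda,\mu)\neq\emptyset$, and $\pi_y(\omega)=\nu$ for every $\omega\in\operatorname{Amal}(\lambda,\mu)$. $Ab$ denotes $A$ together with the entries of $b$. The localization is $\nu_{[\varphi]}(\psi(y))=\nu(\varphi(y,b)\wedge\psi(y))/\nu(\varphi(y,b))$. *)

theory Defs
  imports Complex_Main
begin

text \<open>Terms and formulas of a first-order language with function symbols of type 'f
  and relation symbols of type 'r (each symbol may be applied to argument lists of any
  length, i.e. a symbol f together with a length n is an n-ary symbol).\<close>

datatype 'f trm = Var nat | App 'f "'f trm list"

datatype ('f, 'r) fm =
    FEq "'f trm" "'f trm"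
  | FRel 'r "'f trm list"
  | FNeg "('f, 'r) fm"
  | FConj "('f, 'r) fm" "('f, 'r) fm"
  | FEx nat "('f, 'r) fm"

text \<open>A structure with universe the whole type 'u.\<close>
datatype ('f, 'r, 'u) struct =
  Struct (sfun: "'f \<Rightarrow> 'u list \<Rightarrow> 'u") (srel: "'r \<Rightarrow> 'u list \<Rightarrow> bool")

fun fv_trm :: "'f trm \<Rightarrow> nat set" where
  "fv_trm (Var i) = {i}"
| "fv_trm (App f ts) = (\<Union>t\<in>set ts. fv_trm t)"

fun fv :: "('f, 'r) fm \<Rightarrow> nat set" where
  "fv (FEq s t) = fv_trm s \<union> fv_trm t"
| "fv (FRel r ts) = (\<Union>t\<in>set ts. fv_trm t)"
| "fv (FNeg \<phi>) = fv \<phi>"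
| "fv (FConj \<phi> \<psi>) = fv \<phi> \<union> fv \<psi>"
| "fv (FEx v \<phi>) = fv \<phi> - {v}"

fun eval_trm :: "('f, 'r, 'u) struct \<Rightarrow> (nat \<Rightarrow> 'u) \<Rightarrow> 'f trm \<Rightarrow> 'u" where
  "eval_trm M e (Var i) = e i"
| "eval_trm M e (App f ts) = sfun M f (map (eval_trm M e) ts)"

fun sat :: "('f, 'r, 'u) struct \<Rightarrow> (nat \<Rightarrow> 'u) \<Rightarrow> ('f, 'r) fm \<Rightarrow> bool" where
  "sat M e (FEq s t) = (eval_trm M e s = eval_trm M e t)"
| "sat M e (FRel r ts) = srel M r (map (eval_trm M e) ts)"
| "sat M e (FNeg \<phi>) = (\<not> sat M e \<phi>)"
| "sat M e (FConj \<phi> \<psi>) = (sat M e \<phi> \<and> sat M e \<psi>)"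
| "sat M e (FEx v \<phi>) = (\<exists>a. sat M (e(v := a)) \<phi>)"

text \<open>\<open>Ldef M n C\<close>: the Boolean algebra \<open>\<L>_x(C)\<close> for a tuple of variables x of length n,
  realised (as usual, modulo T = Th(M)) as the set of subsets of \<open>U^n\<close> (lists of length n)
  definable by a formula \<open>\<phi>(x, c)\<close> with parameters \<open>c\<close> from C.  The variables
  \<open>0..n-1\<close> are x, the variables \<open>n..n+k-1\<close> are the parameter places.\<close>
definition Ldef :: "('f, 'r, 'u) struct \<Rightarrow> nat \<Rightarrow> 'u set \<Rightarrow> 'u list set set" where
  "Ldef M n C = {D. \<exists>(\<phi> :: ('f, 'r) fm) ps. set ps \<subseteq> C \<and> fv \<phi> \<subseteq> {..<n + length ps} \<and>
      D = {as. length as = n \<and> sat M (\<lambda>i. (as @ ps) ! i) \<phi>}}"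

definition full :: "nat \<Rightarrow> 'u list set" where
  "full n = {as. length as = n}"

text \<open>Keisler measures \<open>\<mu> \<in> \<M>_x(C)\<close>: finitely additive probability measures on \<open>\<L>_x(C)\<close>
  (values of \<open>\<mu>\<close> outside \<open>\<L>_x(C)\<close> are irrelevant).\<close>
definition keisler :: "('f, 'r, 'u) struct \<Rightarrow> nat \<Rightarrow> 'u set \<Rightarrow> ('u list set \<Rightarrow> real) \<Rightarrow> bool" where
  "keisler M n C \<mu> \<longleftrightarrow>
     (\<forall>D\<in>Ldef M n C. 0 \<le> \<mu> D) \<and> \<mu> (full n) = 1 \<and>
     (\<forall>D\<in>Ldef M n C. \<forall>E\<in>Ldef M n C. D \<inter> E = {} \<longrightarrow> \<mu> (D \<union> E) = \<mu> D + \<mu> E)"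

text \<open>Equality of two measures as measures on the algebra \<open>L\<close> (used for restriction).\<close>
definition agree :: "'a set set \<Rightarrow> ('a set \<Rightarrow> real) \<Rightarrow> ('a set \<Rightarrow> real) \<Rightarrow> bool" where
  "agree L f g \<longleftrightarrow> (\<forall>D\<in>L. f D = g D)"

text \<open>The embeddings \<open>\<phi>(x) \<mapsto> \<phi>(x) \<and> y = y\<close> and \<open>\<psi>(y) \<mapsto> x = x \<and> \<psi>(y)\<close>,
  where |x| = n and |y| = m.\<close>
definition cyl_x :: "nat \<Rightarrow> nat \<Rightarrow> 'u list set \<Rightarrow> 'u list set" where
  "cyl_x n m D = {a @ b | a b. a \<in> D \<and> length b = m}"

definition cyl_y :: "nat \<Rightarrow> nat \<Rightarrow> 'u list set \<Rightarrow> 'u list set" where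
  "cyl_y n m E = {a @ b | a b. length a = n \<and> b \<in> E}"

definition proj_x :: "nat \<Rightarrow> nat \<Rightarrow> ('u list set \<Rightarrow> real) \<Rightarrow> 'u list set \<Rightarrow> real" where
  "proj_x n m \<omega> D = \<omega> (cyl_x n m D)"

definition proj_y :: "nat \<Rightarrow> nat \<Rightarrow> ('u list set \<Rightarrow> real) \<Rightarrow> 'u list set \<Rightarrow> real" where
  "proj_y n m \<omega> E = \<omega> (cyl_y n m E)"

definition amalgam :: "('f, 'r, 'u) struct \<Rightarrow> nat \<Rightarrow> nat \<Rightarrow> 'u set \<Rightarrow> ('u list set \<Rightarrow> real) \<Rightarrow> bool" where
  "amalgam M n m C lam \<longleftrightarrow> keisler M (n + m) C lam \<and>
     (\<forall>D\<in>Ldef M n C. \<forall>E\<in>Ldef M m C.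
        lam (cyl_x n m D \<inter> cyl_y n m E) = proj_x n m lam D * proj_y n m lam E)"

definition Amal :: "('f, 'r, 'u) struct \<Rightarrow> nat \<Rightarrow> nat \<Rightarrow> 'u set \<Rightarrow> ('u list set \<Rightarrow> real)
    \<Rightarrow> ('u list set \<Rightarrow> real) \<Rightarrow> ('u list set \<Rightarrow> real) set" where
  "Amal M n m A lam \<mu> = {\<omega>. amalgam M n m UNIV \<omega> \<and> agree (Ldef M (n + m) A) \<omega> lam \<and>
                          agree (Ldef M n UNIV) (proj_x n m \<omega>) \<mu>}"

definition pushes :: "('f, 'r, 'u) struct \<Rightarrow> nat \<Rightarrow> nat \<Rightarrow> 'u set \<Rightarrow> ('u list set \<Rightarrow> real)
    \<Rightarrow> ('u list set \<Rightarrow> real) \<Rightarrow> bool" where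
  "pushes M n m A \<mu> \<nu> \<longleftrightarrow> (\<exists>lam. keisler M (n + m) A lam \<and>
      agree (Ldef M n A) (proj_x n m lam) \<mu> \<and>
      Amal M n m A lam \<mu> \<noteq> {} \<and>
      (\<forall>\<omega>\<in>Amal M n m A lam \<mu>. agree (Ldef M m UNIV) (proj_y n m \<omega>) \<nu>))"

definition localize :: "('u list set \<Rightarrow> real) \<Rightarrow> 'u list set \<Rightarrow> 'u list set \<Rightarrow> real" where
  "localize \<nu> E0 E = \<nu> (E0 \<inter> E) / \<nu> E0"

definition small :: "'k set \<Rightarrow> 'u set \<Rightarrow> bool" where
  "small K C \<longleftrightarrow> (card_of C, card_of K) \<in> ordLess"

definition elementary_map :: "('f, 'r, 'u) struct \<Rightarrow> 'u set \<Rightarrow> ('u \<Rightarrow> 'u) \<Rightarrow> bool" where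
  "elementary_map M C f \<longleftrightarrow> (\<forall>(\<phi> :: ('f, 'r) fm) ps. set ps \<subseteq> C \<and> fv \<phi> \<subseteq> {..<length ps} \<longrightarrow>
      (sat M (\<lambda>i. ps ! i) \<phi> \<longleftrightarrow> sat M (\<lambda>i. map f ps ! i) \<phi>))"

definition automorphism :: "('f, 'r, 'u) struct \<Rightarrow> ('u \<Rightarrow> 'u) \<Rightarrow> bool" where
  "automorphism M \<sigma> \<longleftrightarrow> bij \<sigma> \<and>
     (\<forall>f as. \<sigma> (sfun M f as) = sfun M f (map \<sigma> as)) \<and>
     (\<forall>r as. srel M r (map \<sigma> as) = srel M r as)"

definition saturated :: "('f, 'r, 'u) struct \<Rightarrow> 'k set \<Rightarrow> bool" where
  "saturated M K \<longleftrightarrow> (\<forall>C (\<Sigma> :: (('f, 'r) fm \<times> 'u list) set). small K C \<longrightarrow>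
      (\<forall>(\<phi>, ps)\<in>\<Sigma>. set ps \<subseteq> C \<and> fv \<phi> \<subseteq> {..<Suc (length ps)}) \<longrightarrow>
      (\<forall>F. finite F \<and> F \<subseteq> \<Sigma> \<longrightarrow> (\<exists>a. \<forall>(\<phi>, ps)\<in>F. sat M (\<lambda>i. (a # ps) ! i) \<phi>)) \<longrightarrow>
      (\<exists>a. \<forall>(\<phi>, ps)\<in>\<Sigma>. sat M (\<lambda>i. (a # ps) ! i) \<phi>))"

definition strongly_homogeneous :: "('f, 'r, 'u) struct \<Rightarrow> 'k set \<Rightarrow> bool" where
  "strongly_homogeneous M K \<longleftrightarrow> (\<forall>C f. small K C \<longrightarrow> elementary_map M C f \<longrightarrow>
      (\<exists>\<sigma>. automorphism M \<sigma> \<and> (\<forall>c\<in>C. \<sigma> c = f c)))"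

text \<open>M is a monster model (of its complete theory T = Th(M)) for the cardinal |K|,
  which is infinite and bigger than the size of the language.\<close>
definition monster_model :: "('f, 'r, 'u) struct \<Rightarrow> 'k set \<Rightarrow> bool" where
  "monster_model M K \<longleftrightarrow> infinite K \<and> (card_of (UNIV :: ('f + 'r) set), card_of K) \<in> ordLess \<and>
     saturated M K \<and> strongly_homogeneous M K"

end

theory Submission imports Defs begin

fun rn_trm :: "(nat \<Rightarrow> nat) \<Rightarrow> 'f trm \<Rightarrow> 'f trm" where
  "rn_trm g (Var i) = Var (g i)"
| "rn_trm g (App f ts) = App f (map (rn_trm g) ts)"

fun rn :: "(nat \<Rightarrow> nat) \<Rightarrow> ('f, 'r) fm \<Rightarrow> ('f, 'r) fm" where
  "rn g (FEq s t) = FEq (rn_trm g s) (rn_trm g t)"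
| "rn g (FRel r ts) = FRel r (map (rn_trm g) ts)"
| "rn g (FNeg \<phi>) = FNeg (rn g \<phi>)"
| "rn g (FConj \<phi> \<psi>) = FConj (rn g \<phi>) (rn g \<psi>)"
| "rn g (FEx v \<phi>) = FEx (g v) (rn g \<phi>)"

lemma eval_rn: "eval_trm M e (rn_trm g t) = eval_trm M (e \<circ> g) t"
  by (induction t) (auto cong: map_cong)

lemma fv_trm_rn: "fv_trm (rn_trm g t) = g ` fv_trm t"
  by (induction t) auto

lemma sat_rn0: "inj g \<Longrightarrow> sat M e (rn g \<phi>) = sat M (e \<circ> g) \<phi>"
proof (induction \<phi> arbitrary: e)
  case (FEx v \<phi>)
  have "\<And>a. (e(g v := a)) \<circ> g = (e \<circ> g)(v := a)"
    using FEx.prems by (auto simp: fun_eq_iff inj_on_def)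
  then show ?case by (simp only: rn.simps sat.simps FEx.IH[OF FEx.prems])
qed (auto simp: eval_rn comp_def cong: map_cong)

lemma fv_rn: "inj g \<Longrightarrow> fv (rn g \<phi>) = g ` fv \<phi>"
  by (induction \<phi>) (auto simp: fv_trm_rn inj_on_def)

lemma eval_cong: "(\<forall>i\<in>fv_trm t. e i = e' i) \<Longrightarrow> eval_trm M e t = eval_trm M e' t"
proof (induction t)
  case (App f ts)
  have "map (eval_trm M e) ts = map (eval_trm M e') ts"
  proof (rule map_cong)
    fix x assume "x \<in> set ts"
    then show "eval_trm M e x = eval_trm M e' x" using App by (intro App.IH) auto
  qed simp
  then show ?case by (simp only: eval_trm.simps)
qed simp

lemma sat_cong: "(\<forall>i\<in>fv \<phi>. e i = e' i) \<Longrightarrow> sat M e \<phi> = sat M e' \<phi>"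
proof (induction \<phi> arbitrary: e e')
  case (FEq s t) then show ?case using eval_cong[of s e e' M] eval_cong[of t e e' M] by simp
next
  case (FRel r ts)
  have "map (eval_trm M e) ts = map (eval_trm M e') ts"
  proof (rule map_cong)
    fix x assume "x \<in> set ts"
    then show "eval_trm M e x = eval_trm M e' x" using FRel by (intro eval_cong) auto
  qed simp
  then show ?case by (simp only: sat.simps)
next
  case (FEx v \<phi>)
  have "\<And>a. sat M (e(v := a)) \<phi> = sat M (e'(v := a)) \<phi>"
    using FEx by (intro FEx.IH) auto
  then show ?case by simp
next
  case (FNeg \<phi>) then show ?case using FNeg.IH[of e e'] by simp
next
  case (FConj \<phi> \<psi>)
  have "sat M e \<phi> = sat M e' \<phi>" by (rule FConj.IH(1)) (use FConj.prems in auto)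
  moreover have "sat M e \<psi> = sat M e' \<psi>" by (rule FConj.IH(2)) (use FConj.prems in auto)
  ultimately show ?case by simp
qed

lemma sat_rn: "inj g \<Longrightarrow> fv \<phi> \<subseteq> S \<Longrightarrow> (\<forall>i\<in>S. e (g i) = e' i) \<Longrightarrow> sat M e (rn g \<phi>) = sat M e' \<phi>"
  by (simp add: sat_rn0) (rule sat_cong, auto)

lemma inj_shift: "inj (\<lambda>i::nat. if i < k then i else i + p)"
  by (auto simp: inj_on_def split: if_splits)

lemma Ldef_mono: "C \<subseteq> C' \<Longrightarrow> Ldef M k C \<subseteq> Ldef M k C'"
  unfolding Ldef_def by blast

lemma Ldef_sub: "D \<in> Ldef M k C \<Longrightarrow> D \<subseteq> full k"
  unfolding Ldef_def full_def by auto

lemma Ldef_diff: "D \<in> Ldef M k C \<Longrightarrow> full k - D \<in> Ldef M k C"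
proof -
  assume "D \<in> Ldef M k C"
  then obtain \<phi> and ps where h: "set ps \<subseteq> C" "fv \<phi> \<subseteq> {..<k + length ps}"
    "D = {as. length as = k \<and> sat M (\<lambda>i. (as @ ps) ! i) \<phi>}" unfolding Ldef_def by blast
  have "full k - D = {as. length as = k \<and> sat M (\<lambda>i. (as @ ps) ! i) (FNeg \<phi>)}"
    using h by (auto simp: full_def)
  moreover have "fv (FNeg \<phi>) \<subseteq> {..<k + length ps}" using h(2) by simp
  ultimately show ?thesis using h(1) unfolding Ldef_def by blast
qed

lemma Ldef_inter: "D \<in> Ldef M k C \<Longrightarrow> E \<in> Ldef M k C \<Longrightarrow> D \<inter> E \<in> Ldef M k C"
proof -
  assume "D \<in> Ldef M k C" "E \<in> Ldef M k C"
  then obtain \<phi> and ps \<psi> qs where h: "set ps \<subseteq> C" "fv \<phi> \<subseteq> {..<k + length ps}"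
    "D = {as. length as = k \<and> sat M (\<lambda>i. (as @ ps) ! i) \<phi>}"
    "set qs \<subseteq> C" "fv \<psi> \<subseteq> {..<k + length qs}"
    "E = {as. length as = k \<and> sat M (\<lambda>i. (as @ qs) ! i) \<psi>}" unfolding Ldef_def by blast
  define g where "g = (\<lambda>i::nat. if i < k then i else i + length ps)"
  have ig: "inj g" unfolding g_def by (rule inj_shift)
  have 1: "sat M (\<lambda>i. (as @ ps @ qs) ! i) \<phi> = sat M (\<lambda>i. (as @ ps) ! i) \<phi>" if "length as = k" for as
    using h(2) that by (intro sat_cong) (auto simp: nth_append)
  have 2: "sat M (\<lambda>i. (as @ ps @ qs) ! i) (rn g \<psi>) = sat M (\<lambda>i. (as @ qs) ! i) \<psi>" if "length as = k" for as
    using h(5) that ig by (intro sat_rn[of g \<psi> "{..<k + length qs}"]) (auto simp: nth_append g_def)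
  have "D \<inter> E = {as. length as = k \<and> sat M (\<lambda>i. (as @ ps @ qs) ! i) (FConj \<phi> (rn g \<psi>))}"
    using h 1 2 by auto
  moreover have "fv (FConj \<phi> (rn g \<psi>)) \<subseteq> {..<k + length (ps @ qs)}"
    using h(2,5) ig by (auto simp: fv_rn g_def)
  moreover have "set (ps @ qs) \<subseteq> C" using h(1,4) by simp
  ultimately show ?thesis unfolding Ldef_def by blast
qed

lemma Ldef_cyl_x: "D \<in> Ldef M n C \<Longrightarrow> cyl_x n m D \<in> Ldef M (n + m) C"
proof -
  assume "D \<in> Ldef M n C"
  then obtain \<phi> and ps where h: "set ps \<subseteq> C" "fv \<phi> \<subseteq> {..<n + length ps}"
    "D = {as. length as = n \<and> sat M (\<lambda>i. (as @ ps) ! i) \<phi>}" unfolding Ldef_def by blast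
  define g where "g = (\<lambda>i::nat. if i < n then i else i + m)"
  have ig: "inj g" unfolding g_def by (rule inj_shift)
  have 2: "sat M (\<lambda>i. (as @ ps) ! i) (rn g \<phi>) = sat M (\<lambda>i. (take n as @ ps) ! i) \<phi>" if "length as = n + m" for as
    using h(2) that ig by (intro sat_rn[of g \<phi> "{..<n + length ps}"]) (auto simp: nth_append g_def)
  have "cyl_x n m D = {as. length as = n + m \<and> sat M (\<lambda>i. (as @ ps) ! i) (rn g \<phi>)}"
  proof (intro set_eqI iffI)
    fix xs assume "xs \<in> cyl_x n m D"
    then obtain a b where "xs = a @ b" "a \<in> D" "length b = m" unfolding cyl_x_def by blast
    then show "xs \<in> {as. length as = n + m \<and> sat M (\<lambda>i. (as @ ps) ! i) (rn g \<phi>)}"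
      using 2[of xs] h(3) by auto
  next
    fix xs assume a: "xs \<in> {as. length as = n + m \<and> sat M (\<lambda>i. (as @ ps) ! i) (rn g \<phi>)}"
    then have "take n xs \<in> D" using 2[of xs] h(3) by auto
    moreover have "length (drop n xs) = m" using a by auto
    ultimately show "xs \<in> cyl_x n m D" unfolding cyl_x_def
      by (intro CollectI exI[of _ "take n xs"] exI[of _ "drop n xs"]) auto
  qed
  moreover have "fv (rn g \<phi>) \<subseteq> {..<n + m + length ps}"
    using h(2) ig by (auto simp: fv_rn g_def)
  ultimately show ?thesis using h(1) unfolding Ldef_def by blast
qed

lemma Ldef_cyl_y: "E \<in> Ldef M m C \<Longrightarrow> cyl_y n m E \<in> Ldef M (n + m) C"
proof -
  assume "E \<in> Ldef M m C"
  then obtain \<phi> and ps where h: "set ps \<subseteq> C" "fv \<phi> \<subseteq> {..<m + length ps}"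
    "E = {as. length as = m \<and> sat M (\<lambda>i. (as @ ps) ! i) \<phi>}" unfolding Ldef_def by blast
  define g where "g = (\<lambda>i::nat. i + n)"
  have ig: "inj g" unfolding g_def by (auto simp: inj_on_def)
  have 2: "sat M (\<lambda>i. (as @ ps) ! i) (rn g \<phi>) = sat M (\<lambda>i. (drop n as @ ps) ! i) \<phi>" if "length as = n + m" for as
    using h(2) that ig by (intro sat_rn[of g \<phi> "{..<m + length ps}"]) (auto simp: nth_append g_def add.commute)
  have "cyl_y n m E = {as. length as = n + m \<and> sat M (\<lambda>i. (as @ ps) ! i) (rn g \<phi>)}"
  proof (intro set_eqI iffI)
    fix xs assume "xs \<in> cyl_y n m E"
    then obtain a b where "xs = a @ b" "b \<in> E" "length a = n" unfolding cyl_y_def by blast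
    then show "xs \<in> {as. length as = n + m \<and> sat M (\<lambda>i. (as @ ps) ! i) (rn g \<phi>)}"
      using 2[of xs] h(3) by auto
  next
    fix xs assume a: "xs \<in> {as. length as = n + m \<and> sat M (\<lambda>i. (as @ ps) ! i) (rn g \<phi>)}"
    then have "drop n xs \<in> E" using 2[of xs] h(3) by auto
    moreover have "length (take n xs) = n" using a by auto
    ultimately show "xs \<in> cyl_y n m E" unfolding cyl_y_def
      by (intro CollectI exI[of _ "take n xs"] exI[of _ "drop n xs"]) auto
  qed
  moreover have "fv (rn g \<phi>) \<subseteq> {..<n + m + length ps}"
    using h(2) ig by (auto simp: fv_rn g_def)
  ultimately show ?thesis using h(1) unfolding Ldef_def by blast
qed

lemma cy_mem: "xs \<in> cyl_y n m E \<longleftrightarrow> n \<le> length xs \<and> drop n xs \<in> E"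
proof
  assume "xs \<in> cyl_y n m E"
  then obtain a b where "xs = a @ b" "length a = n" "b \<in> E" unfolding cyl_y_def by blast
  then show "n \<le> length xs \<and> drop n xs \<in> E" by simp
next
  assume a: "n \<le> length xs \<and> drop n xs \<in> E"
  have "xs = take n xs @ drop n xs" by simp
  moreover have "length (take n xs) = n" using a by simp
  ultimately show "xs \<in> cyl_y n m E" unfolding cyl_y_def using a by blast
qed

lemma cy_int: "cyl_y n m E \<inter> cyl_y n m F = cyl_y n m (E \<inter> F)"
  by (rule set_eqI) (simp only: cy_mem Int_iff, blast)

lemma cy_un: "cyl_y n m E \<union> cyl_y n m F = cyl_y n m (E \<union> F)"
  by (rule set_eqI) (simp only: cy_mem Un_iff, blast)

lemma cy_full: "cyl_y n m (full m) = full (n + m)"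
  by (rule set_eqI) (auto simp: cy_mem full_def)

lemma keisler_mono: "keisler M k C' f \<Longrightarrow> C \<subseteq> C' \<Longrightarrow> keisler M k C f"
proof -
  assume a: "keisler M k C' f" "C \<subseteq> C'"
  have s: "\<And>D. D \<in> Ldef M k C \<Longrightarrow> D \<in> Ldef M k C'" using Ldef_mono[OF a(2)] by (rule subsetD)
  show ?thesis using a(1) s unfolding keisler_def by simp
qed

theorem proposition5p7:
  fixes M :: "('f, 'r, 'u) struct" and K :: "'k set"
    and A :: "'u set" and b :: "'u list" and n m :: nat
    and \<mu> \<nu> :: "'u list set \<Rightarrow> real" and E0 :: "'u list set"
  assumes "monster_model M K"
    and "small K A"
    and "keisler M n UNIV \<mu>"
    and "keisler M m UNIV \<nu>"
    and "E0 \<in> Ldef M m (set b)"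
    and "0 < \<nu> E0" and "\<nu> E0 < 1"
    and "pushes M n m A \<mu> \<nu>"
  shows "pushes M n m (A \<union> set b) \<mu> (localize \<nu> E0)"
proof -
  let ?L = "Ldef M"
  let ?cx = "cyl_x n m" and ?cy = "cyl_y n m"
  obtain lam where lk: "keisler M (n + m) A lam" and lne: "Amal M n m A lam \<mu> \<noteq> {}"
    and allAm: "\<forall>\<omega>\<in>Amal M n m A lam \<mu>. agree (?L m UNIV) (proj_y n m \<omega>) \<nu>"
    using assms(8) unfolding pushes_def by blast
  obtain \<omega>0 where w0: "\<omega>0 \<in> Amal M n m A lam \<mu>" using lne by blast
  have k0: "keisler M (n + m) UNIV \<omega>0" and ag0: "\<forall>S\<in>?L (n + m) A. \<omega>0 S = lam S"
    and px0: "\<forall>D\<in>?L n UNIV. \<omega>0 (?cx D) = \<mu> D"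
    and pr0: "\<forall>D\<in>?L n UNIV. \<forall>E\<in>?L m UNIV. \<omega>0 (?cx D \<inter> ?cy E) = \<omega>0 (?cx D) * \<omega>0 (?cy E)"
    using w0 unfolding Amal_def amalgam_def agree_def proj_x_def proj_y_def by auto
  have py0: "\<forall>E\<in>?L m UNIV. \<omega>0 (?cy E) = \<nu> E"
    using allAm w0 unfolding agree_def proj_y_def by auto
  have prod0: "\<omega>0 (?cx D \<inter> ?cy E) = \<mu> D * \<nu> E" if "D \<in> ?L n UNIV" "E \<in> ?L m UNIV" for D E
    using pr0 px0 py0 that by auto
  have k0nn: "\<And>S. S \<in> ?L (n + m) UNIV \<Longrightarrow> 0 \<le> \<omega>0 S"
    and k0add: "\<And>S T. S \<in> ?L (n + m) UNIV \<Longrightarrow> T \<in> ?L (n + m) UNIV \<Longrightarrow> S \<inter> T = {} \<Longrightarrow> \<omega>0 (S \<union> T) = \<omega>0 S + \<omega>0 T"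
    using k0 unfolding keisler_def by auto
  have nuadd: "\<And>S T. S \<in> ?L m UNIV \<Longrightarrow> T \<in> ?L m UNIV \<Longrightarrow> S \<inter> T = {} \<Longrightarrow> \<nu> (S \<union> T) = \<nu> S + \<nu> T"
    and nufull: "\<nu> (full m) = 1"
    using assms(4) unfolding keisler_def by auto
  have E0U: "E0 \<in> ?L m UNIV" using assms(5) Ldef_mono[of "set b" UNIV M m] by blast
  define Ec where "Ec = full m - E0"
  have EcU: "Ec \<in> ?L m UNIV" unfolding Ec_def using E0U by (rule Ldef_diff)
  have E0f: "E0 \<subseteq> full m" using E0U by (rule Ldef_sub)
  define c where "c = \<nu> E0"
  have cpos: "c > 0" using assms(6) c_def by simp
  define Y0 where "Y0 = ?cy E0"
  define Yc where "Yc = ?cy Ec"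
  have Y0U: "Y0 \<in> ?L (n + m) UNIV" unfolding Y0_def using E0U by (rule Ldef_cyl_y)
  have YcU: "Yc \<in> ?L (n + m) UNIV" unfolding Yc_def using EcU by (rule Ldef_cyl_y)
  have Yun: "Y0 \<union> Yc = full (n + m)" unfolding Y0_def Yc_def cy_un Ec_def
    using E0f cy_full[of n m] by (simp add: Un_absorb1 Un_Diff_cancel)
  have Ydis: "Y0 \<inter> Yc = {}" unfolding Y0_def Yc_def cy_int Ec_def by (simp add: cyl_y_def)
  have EcE0: "\<nu> Ec = 1 - c"
  proof -
    have "\<nu> (E0 \<union> Ec) = \<nu> E0 + \<nu> Ec" using nuadd[OF E0U EcU] Ec_def by auto
    moreover have "E0 \<union> Ec = full m" using E0f Ec_def by auto
    ultimately show ?thesis using nufull c_def by simp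
  qed
  have nusplit: "\<nu> E = \<nu> (E \<inter> E0) + \<nu> (E \<inter> Ec)" if "E \<in> ?L m UNIV" for E
  proof -
    have "E = (E \<inter> E0) \<union> (E \<inter> Ec)" using Ldef_sub[OF that] Ec_def by auto
    then show ?thesis using nuadd[OF Ldef_inter[OF that E0U] Ldef_inter[OF that EcU]] Ec_def
      by auto
  qed
  have w0split: "\<omega>0 S = \<omega>0 (S \<inter> Y0) + \<omega>0 (S \<inter> Yc)" if "S \<in> ?L (n + m) UNIV" for S
  proof -
    have "S = (S \<inter> Y0) \<union> (S \<inter> Yc)" using Ldef_sub[OF that] Yun by auto
    then show ?thesis using k0add[OF Ldef_inter[OF that Y0U] Ldef_inter[OF that YcU]] Ydis
      by auto
  qed
  have cyY0: "\<omega>0 (?cy E \<inter> Y0) = \<nu> (E \<inter> E0)" if "E \<in> ?L m UNIV" for E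
    unfolding Y0_def cy_int using py0 Ldef_inter[OF that E0U] by auto
  have cyYc: "\<omega>0 (?cy E \<inter> Yc) = \<nu> (E \<inter> Ec)" if "E \<in> ?L m UNIV" for E
    unfolding Yc_def cy_int using py0 Ldef_inter[OF that EcU] by auto
  have cxY0: "\<omega>0 (?cx D \<inter> Y0) = \<mu> D * c" if "D \<in> ?L n UNIV" for D
    unfolding Y0_def c_def using prod0[OF that E0U] .
  have cxYc: "\<omega>0 (?cx D \<inter> Yc) = \<mu> D * (1 - c)" if "D \<in> ?L n UNIV" for D
    unfolding Yc_def using prod0[OF that EcU] EcE0 by simp
  have cxcyY0: "\<omega>0 (?cx D \<inter> ?cy E \<inter> Y0) = \<mu> D * \<nu> (E \<inter> E0)" if "D \<in> ?L n UNIV" "E \<in> ?L m UNIV" for D E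
    unfolding Y0_def Int_assoc cy_int using prod0[OF that(1) Ldef_inter[OF that(2) E0U]] .
  have cxcyYc: "\<omega>0 (?cx D \<inter> ?cy E \<inter> Yc) = \<mu> D * \<nu> (E \<inter> Ec)" if "D \<in> ?L n UNIV" "E \<in> ?L m UNIV" for D E
    unfolding Yc_def Int_assoc cy_int using prod0[OF that(1) Ldef_inter[OF that(2) EcU]] .
  have Y0c: "\<omega>0 Y0 = c" using py0 E0U Y0_def c_def by auto
  have Ycc: "\<omega>0 Yc = 1 - c" using py0 EcU Yc_def EcE0 by auto
  have Y0f: "Y0 \<subseteq> full (n + m)" and Ycf: "Yc \<subseteq> full (n + m)" using Yun by auto

  define \<omega>' where "\<omega>' S = \<omega>0 (S \<inter> Y0) / c" for S
  have k': "keisler M (n + m) UNIV \<omega>'"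
    unfolding keisler_def
  proof (intro conjI ballI impI)
    fix D assume "D \<in> ?L (n + m) UNIV"
    then show "0 \<le> \<omega>' D" unfolding \<omega>'_def using k0nn[OF Ldef_inter[OF _ Y0U]] cpos by simp
  next
    show "\<omega>' (full (n + m)) = 1" unfolding \<omega>'_def using Y0f Y0c cpos by (simp add: Int_absorb1)
  next
    fix D E assume a: "D \<in> ?L (n + m) UNIV" "E \<in> ?L (n + m) UNIV" "D \<inter> E = {}"
    have "(D \<union> E) \<inter> Y0 = (D \<inter> Y0) \<union> (E \<inter> Y0)" by auto
    moreover have "(D \<inter> Y0) \<inter> (E \<inter> Y0) = {}" using a(3) by auto
    ultimately show "\<omega>' (D \<union> E) = \<omega>' D + \<omega>' E" unfolding \<omega>'_def
      using k0add[OF Ldef_inter[OF a(1) Y0U] Ldef_inter[OF a(2) Y0U]]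
      by (simp add: add_divide_distrib)
  qed
  have px': "\<omega>' (?cx D) = \<mu> D" if "D \<in> ?L n UNIV" for D
    unfolding \<omega>'_def using cxY0[OF that] cpos by simp
  have py': "\<omega>' (?cy E) = \<nu> (E \<inter> E0) / c" if "E \<in> ?L m UNIV" for E
    unfolding \<omega>'_def using cyY0[OF that] by simp
  have am': "amalgam M n m UNIV \<omega>'"
    unfolding amalgam_def proj_x_def proj_y_def
  proof (intro conjI k' ballI)
    fix D E assume a: "D \<in> ?L n UNIV" "E \<in> ?L m UNIV"
    show "\<omega>' (?cx D \<inter> ?cy E) = \<omega>' (?cx D) * \<omega>' (?cy E)"
    proof -
      have "\<omega>' (?cx D \<inter> ?cy E) = \<mu> D * \<nu> (E \<inter> E0) / c" unfolding \<omega>'_def using cxcyY0[OF a] by simp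
      then show ?thesis using px'[OF a(1)] py'[OF a(2)] by simp
    qed
  qed
  have sub: "A \<subseteq> A \<union> set b" "A \<union> set b \<subseteq> UNIV" by auto
  have inAm': "\<omega>' \<in> Amal M n m (A \<union> set b) \<omega>' \<mu>"
    unfolding Amal_def agree_def proj_x_def using am' px' by auto
  show ?thesis
    unfolding pushes_def
  proof (intro exI[of _ \<omega>'] conjI ballI)
    show "keisler M (n + m) (A \<union> set b) \<omega>'" using keisler_mono[OF k' sub(2)] .
    show "agree (?L n (A \<union> set b)) (proj_x n m \<omega>') \<mu>"
      unfolding agree_def proj_x_def using px' Ldef_mono[OF sub(2)] by blast
    show "Amal M n m (A \<union> set b) \<omega>' \<mu> \<noteq> {}" using inAm' by blast
  next
    fix \<omega>2 assume w2: "\<omega>2 \<in> Amal M n m (A \<union> set b) \<omega>' \<mu>"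
    have k2: "keisler M (n + m) UNIV \<omega>2" and ag2: "\<forall>S\<in>?L (n + m) (A \<union> set b). \<omega>2 S = \<omega>' S"
      and px2: "\<forall>D\<in>?L n UNIV. \<omega>2 (?cx D) = \<mu> D"
      and pr2: "\<forall>D\<in>?L n UNIV. \<forall>E\<in>?L m UNIV. \<omega>2 (?cx D \<inter> ?cy E) = \<omega>2 (?cx D) * \<omega>2 (?cy E)"
      using w2 unfolding Amal_def amalgam_def agree_def proj_x_def proj_y_def by auto
    have k2nn: "\<And>S. S \<in> ?L (n + m) UNIV \<Longrightarrow> 0 \<le> \<omega>2 S"
      and k2add: "\<And>S T. S \<in> ?L (n + m) UNIV \<Longrightarrow> T \<in> ?L (n + m) UNIV \<Longrightarrow> S \<inter> T = {} \<Longrightarrow> \<omega>2 (S \<union> T) = \<omega>2 S + \<omega>2 T"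
      and k2full: "\<omega>2 (full (n + m)) = 1"
      using k2 unfolding keisler_def by auto
    define \<omega>3 where "\<omega>3 S = c * \<omega>2 S + \<omega>0 (S \<inter> Yc)" for S
    have k3: "keisler M (n + m) UNIV \<omega>3"
      unfolding keisler_def
    proof (intro conjI ballI impI)
      fix D assume "D \<in> ?L (n + m) UNIV"
      then show "0 \<le> \<omega>3 D" unfolding \<omega>3_def using k0nn[OF Ldef_inter[OF _ YcU]] k2nn cpos by simp
    next
      show "\<omega>3 (full (n + m)) = 1" unfolding \<omega>3_def using Ycf Ycc k2full by (simp add: Int_absorb1)
    next
      fix D E assume a: "D \<in> ?L (n + m) UNIV" "E \<in> ?L (n + m) UNIV" "D \<inter> E = {}"
      have "(D \<union> E) \<inter> Yc = (D \<inter> Yc) \<union> (E \<inter> Yc)" by auto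
      moreover have "(D \<inter> Yc) \<inter> (E \<inter> Yc) = {}" using a(3) by auto
      ultimately show "\<omega>3 (D \<union> E) = \<omega>3 D + \<omega>3 E" unfolding \<omega>3_def
        using k0add[OF Ldef_inter[OF a(1) YcU] Ldef_inter[OF a(2) YcU]] k2add[OF a]
        by (simp add: algebra_simps)
    qed
    have px3: "\<omega>3 (?cx D) = \<mu> D" if "D \<in> ?L n UNIV" for D
      unfolding \<omega>3_def using cxYc[OF that] px2 that by (simp add: algebra_simps)
    have py3: "\<omega>3 (?cy E) = c * \<omega>2 (?cy E) + \<nu> (E \<inter> Ec)" if "E \<in> ?L m UNIV" for E
      unfolding \<omega>3_def using cyYc[OF that] by simp
    have am3: "amalgam M n m UNIV \<omega>3"
      unfolding amalgam_def proj_x_def proj_y_def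
    proof (intro conjI k3 ballI)
      fix D E assume a: "D \<in> ?L n UNIV" "E \<in> ?L m UNIV"
      show "\<omega>3 (?cx D \<inter> ?cy E) = \<omega>3 (?cx D) * \<omega>3 (?cy E)"
        using px3[OF a(1)] py3[OF a(2)] cxcyYc[OF a] pr2 px2 a unfolding \<omega>3_def
        by (simp add: algebra_simps)
    qed
    have ag3: "\<omega>3 S = lam S" if "S \<in> ?L (n + m) A" for S
    proof -
      have SU: "S \<in> ?L (n + m) UNIV" using that Ldef_mono[of A UNIV] by blast
      have "\<omega>2 S = \<omega>' S" using ag2 that Ldef_mono[OF sub(1)] by blast
      then have "c * \<omega>2 S = \<omega>0 (S \<inter> Y0)" unfolding \<omega>'_def using cpos by simp
      then have "\<omega>3 S = \<omega>0 S" unfolding \<omega>3_def using w0split[OF SU] by simp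
      then show ?thesis using ag0 that by simp
    qed
    have "\<omega>3 \<in> Amal M n m A lam \<mu>"
      unfolding Amal_def agree_def proj_x_def using am3 ag3 px3 by auto
    then have nu3: "\<forall>E\<in>?L m UNIV. \<omega>3 (?cy E) = \<nu> E"
      using allAm unfolding agree_def proj_y_def by auto
    show "agree (?L m UNIV) (proj_y n m \<omega>2) (localize \<nu> E0)"
      unfolding agree_def proj_y_def localize_def
    proof
      fix E assume E: "E \<in> ?L m UNIV"
      have "c * \<omega>2 (?cy E) = \<nu> (E \<inter> E0)" using nu3 E py3[OF E] nusplit[OF E] by simp
      then show "\<omega>2 (?cy E) = \<nu> (E0 \<inter> E) / \<nu> E0" using cpos c_def
        by (simp add: Int_commute field_simps)
    qed
  qed
qed

end
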